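(* Let $\Omega$ be a transitive state space (normalized so that its maximally mixed state $\omega_M$ satisfies $(\omega_M,\omega_M)_E=1$). Then the vector $\hat u\in V$ representing the unit effect $u$ via the inner product $\langle\cdot,\cdot\rangle_{GL(\Omega)}$ (i.e. $u(x)=\langle\hat u,x\rangle_{GL(\Omega)}$ for all $x\in V$; $\hat u$ lies in the internal dual cone $V^{*int}_{+}$) is equal to $\omega_M$.
   Context: $V=\mathbb R^{N+1}$ with Euclidean inner product $(\cdot,\cdot)_E$. A state space $\Omega\subset V$ is a compact convex set with $\mathrm{span}(\Omega)=V$ and $0\notin\mathrm{aff}(\Omega)$; $V_+=\{\lambda\omega:\lambda\ge0,\omega\in\Omega\}$; the unit effect $u\in V^*$ is the linear functional with $u(\omega)=1$ for all $\omega\in\Omega$. $GL(\Omega)$ is the compact group of linear bijections $T:V\to V$ with $T(\Omega)=\Omega$, $\mu$ its normalized Haar measure, and $\langle x,y\rangle_{GL(\Omega)}=\int_{GL(\Omega)}(Tx,Ty)_E\,d\mu(T)$. $\Omega$ is transitive if $GL(\Omega)$ acts transitively on the extreme points of $\Omega$; in that case there is a unique state $\omega_M\in\Omega$ (maximally mixed state) with $T\omega_M=\omega_M$ for all $T\in GL(\Omega)$, and by convention $\Omega$ is rescaled so that $(\omega_M,\omega_M)_E=1$. $V^{*int}_+=\{y\in V:\langle x,y\rangle_{GL(\Omega)}\ge0\ \forall x\in V_+\}$. *)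

theory Defs
  imports "HOL-Analysis.Analysis" "HOL-Probability.Probability"
begin

text \<open>V = R^{N+1} is modelled as real^'n for a finite index type 'n; the Euclidean
inner product is the standard inner product.  Linear maps V -> V are matrices.\<close>

definition state_space :: "(real^'n) set \<Rightarrow> bool" where
  "state_space \<Omega> \<longleftrightarrow> compact \<Omega> \<and> convex \<Omega> \<and> span \<Omega> = UNIV \<and> 0 \<notin> affine hull \<Omega>"

definition GL_Omega :: "(real^'n) set \<Rightarrow> (real^'n^'n) set" where
  "GL_Omega \<Omega> = {T. invertible T \<and> (\<lambda>x. T *v x) ` \<Omega> = \<Omega>}"

definition transitive_state_space :: "(real^'n) set \<Rightarrow> bool" where
  "transitive_state_space \<Omega> \<longleftrightarrow> state_space \<Omega> \<and>
     (\<forall>x y. x extreme_point_of \<Omega> \<longrightarrow> y extreme_point_of \<Omega> \<longrightarrow>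
        (\<exists>T\<in>GL_Omega \<Omega>. T *v x = y))"

definition haar_GL :: "(real^'n) set \<Rightarrow> (real^'n^'n) measure \<Rightarrow> bool" where
  "haar_GL \<Omega> \<mu> \<longleftrightarrow> sets \<mu> = sets borel \<and> prob_space \<mu> \<and> emeasure \<mu> (GL_Omega \<Omega>) = 1 \<and>
     (\<forall>S\<in>GL_Omega \<Omega>. distr \<mu> \<mu> (\<lambda>T. S ** T) = \<mu> \<and> distr \<mu> \<mu> (\<lambda>T. T ** S) = \<mu>)"

definition inner_GL :: "(real^'n^'n) measure \<Rightarrow> real^'n \<Rightarrow> real^'n \<Rightarrow> real" where
  "inner_GL \<mu> x y = (\<integral>T. (T *v x) \<bullet> (T *v y) \<partial>\<mu>)"

end

theory Submission
  imports Defs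
begin
lemma cont_mv: "continuous_on UNIV (\<lambda>T::real^'n^'m. T *v x)"
proof -
  have "(\<lambda>T::real^'n^'m. T *v x) = (\<lambda>T. \<chi> i. \<Sum>j\<in>UNIV. T$i$j * x$j)"
    by (simp add: matrix_vector_mult_def)
  moreover have "continuous_on UNIV (\<lambda>T::real^'n^'m. \<chi> i. \<Sum>j\<in>UNIV. T$i$j * x$j)"
    by (intro continuous_on_vec_lambda continuous_intros)
  ultimately show ?thesis by metis
qed
lemma meas_ip: "(\<lambda>T::real^'n^'n. (T *v x) \<bullet> (T *v y)) \<in> borel_measurable borel"
  by (intro borel_measurable_continuous_onI continuous_intros cont_mv)
lemma meas_mul: "(\<lambda>T::real^'n^'n. T ** S) \<in> borel_measurable borel"
proof -
  have "(\<lambda>T::real^'n^'n. T ** S) = (\<lambda>T. \<chi> i j. \<Sum>k\<in>UNIV. T$i$k * S$k$j)"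
    by (simp add: matrix_matrix_mult_def)
  moreover have "continuous_on UNIV (\<lambda>T::real^'n^'n. \<chi> i j. \<Sum>k\<in>UNIV. T$i$k * S$k$j)"
    by (intro continuous_on_vec_lambda continuous_intros)
  ultimately show ?thesis by (metis borel_measurable_continuous_onI)
qed

lemma GL_bound:
  fixes \<Omega> :: "(real^'n) set"
  assumes "state_space \<Omega>"
  shows "\<exists>K. \<forall>T\<in>GL_Omega \<Omega>. norm (T *v x) \<le> K"
proof -
  have "bounded \<Omega>" using assms compact_imp_bounded unfolding state_space_def by blast
  then obtain R where R: "\<And>w. w \<in> \<Omega> \<Longrightarrow> norm w \<le> R" by (meson bounded_iff)
  have "x \<in> span \<Omega>" using assms unfolding state_space_def by simp
  then obtain t r where t: "finite t" "t \<subseteq> \<Omega>" and x: "x = (\<Sum>a\<in>t. r a *\<^sub>R a)"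
    unfolding span_explicit by blast
  have "norm (T *v x) \<le> (\<Sum>a\<in>t. \<bar>r a\<bar> * R)" if T: "T \<in> GL_Omega \<Omega>" for T
  proof -
    have "T *v x = (\<Sum>a\<in>t. r a *\<^sub>R (T *v a))"
      unfolding x using t(1)
      by (induction t rule: finite_induct) (simp_all add: matrix_vector_right_distrib matrix_vector_mult_scaleR)
    also have "norm \<dots> \<le> (\<Sum>a\<in>t. norm (r a *\<^sub>R (T *v a)))" by (rule norm_sum)
    also have "\<dots> \<le> (\<Sum>a\<in>t. \<bar>r a\<bar> * R)"
    proof (rule sum_mono)
      fix a assume "a \<in> t"
      then have "T *v a \<in> \<Omega>" using T t(2) unfolding GL_Omega_def by blast
      then show "norm (r a *\<^sub>R (T *v a)) \<le> \<bar>r a\<bar> * R"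
        using R by (simp add: mult_left_mono)
    qed
    finally show ?thesis .
  qed
  then show ?thesis by blast
qed

theorem lemma3p1:
  fixes \<Omega> :: "(real^'n) set" and u :: "real^'n \<Rightarrow> real" and \<omega>M u_hat :: "real^'n"
    and \<mu> :: "(real^'n^'n) measure"
  assumes "transitive_state_space \<Omega>"
    and "linear u" and "\<forall>\<omega>\<in>\<Omega>. u \<omega> = 1"
    and "\<omega>M \<in> \<Omega>" and "\<forall>T\<in>GL_Omega \<Omega>. T *v \<omega>M = \<omega>M"
    and "\<omega>M \<bullet> \<omega>M = 1"
    and "haar_GL \<Omega> \<mu>"
    and "\<forall>x. u x = inner_GL \<mu> u_hat x"
  shows "u_hat = \<omega>M"
proof -
  note H = assms(7)[unfolded haar_GL_def]
  have ss: "state_space \<Omega>" using assms(1) unfolding transitive_state_space_def by blast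
  have sets: "sets \<mu> = sets borel" and P: "prob_space \<mu>" and GL1: "emeasure \<mu> (GL_Omega \<Omega>) = 1"
    using H by auto
  have inv: "\<And>S. S \<in> GL_Omega \<Omega> \<Longrightarrow> distr \<mu> \<mu> (\<lambda>T. T ** S) = \<mu>" using H by auto
  have bm: "f \<in> borel_measurable \<mu>" if "f \<in> borel_measurable borel" for f :: "real^'n^'n \<Rightarrow> real"
    using that measurable_cong_sets[OF sets refl, of borel] by metis
  have GLs: "GL_Omega \<Omega> \<in> sets \<mu>" using GL1 emeasure_neq_0_sets by force
  have AEGL: "AE T in \<mu>. T \<in> GL_Omega \<Omega>"
    using prob_space.AE_in_set_eq_1[OF P GLs] GL1 by (simp add: measure_def)
  have integ: "integrable \<mu> (\<lambda>T. (T *v x) \<bullet> (T *v y))" for x y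
  proof -
    obtain Kx where Kx: "\<forall>T\<in>GL_Omega \<Omega>. norm (T *v x) \<le> Kx" using GL_bound[OF ss] by blast
    obtain Ky where Ky: "\<forall>T\<in>GL_Omega \<Omega>. norm (T *v y) \<le> Ky" using GL_bound[OF ss] by blast
    have "AE T in \<mu>. norm ((T *v x) \<bullet> (T *v y)) \<le> Kx * Ky"
      using AEGL
    proof eventually_elim
      case (elim T)
      have "norm ((T *v x) \<bullet> (T *v y)) \<le> norm (T *v x) * norm (T *v y)"
        using Cauchy_Schwarz_ineq2 by simp
      also have "\<dots> \<le> Kx * Ky"
        using Kx Ky elim by (intro mult_mono) (auto intro: order_trans[OF norm_ge_zero])
      finally show ?case .
    qed
    then show ?thesis
      by (rule finite_measure.integrable_const_bound[OF prob_space.finite_measure[OF P] _ bm[OF meas_ip]])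
  qed
  have invar: "inner_GL \<mu> (S *v x) (S *v y) = inner_GL \<mu> x y" if S: "S \<in> GL_Omega \<Omega>" for S x y
  proof -
    have m: "(\<lambda>T. T ** S) \<in> measurable \<mu> \<mu>"
      using meas_mul[of S] measurable_cong_sets[OF sets sets] by simp
    have "inner_GL \<mu> x y = integral\<^sup>L (distr \<mu> \<mu> (\<lambda>T. T ** S)) (\<lambda>T. (T *v x) \<bullet> (T *v y))"
      unfolding inner_GL_def using inv[OF S] by simp
    also have "\<dots> = integral\<^sup>L \<mu> (\<lambda>T. ((T ** S) *v x) \<bullet> ((T ** S) *v y))"
      by (rule integral_distr[OF m bm[OF meas_ip]])
    also have "\<dots> = inner_GL \<mu> (S *v x) (S *v y)"
      unfolding inner_GL_def by (simp add: matrix_vector_mul_assoc)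
    finally show ?thesis by simp
  qed
  define g where "g x = inner_GL \<mu> \<omega>M x" for x
  have lin_g: "linear g"
  proof (rule linearI)
    fix a b
    show "g (a + b) = g a + g b"
      unfolding g_def inner_GL_def
      by (simp add: matrix_vector_right_distrib inner_add_right integ)
  next
    fix c a
    show "g (c *\<^sub>R a) = c *\<^sub>R g a"
      unfolding g_def inner_GL_def
      by (simp add: matrix_vector_mult_scaleR)
  qed
  have g1: "g \<omega>M = 1"
  proof -
    have "g \<omega>M = integral\<^sup>L \<mu> (\<lambda>T. 1)"
      unfolding g_def inner_GL_def
      by (rule integral_cong_AE) (use AEGL assms(5,6) bm[OF meas_ip] in \<open>auto elim!: AE_mp\<close>)
    also have "\<dots> = 1" using prob_space.prob_space[OF P] by simp
    finally show ?thesis .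
  qed
  define E where "E = {x. x extreme_point_of \<Omega>}"
  have KM: "\<Omega> = convex hull E"
    unfolding E_def using ss Krein_Milman_Minkowski unfolding state_space_def by blast
  then have "E \<noteq> {}" using assms(4) by auto
  then obtain e0 where e0: "e0 \<in> E" by blast
  define c where "c = g e0"
  have gE: "g e = c * u e" if e: "e \<in> E" for e
  proof -
    obtain T where T: "T \<in> GL_Omega \<Omega>" "T *v e0 = e"
      using assms(1) e e0 unfolding transitive_state_space_def E_def by blast
    have "g e = inner_GL \<mu> (T *v \<omega>M) (T *v e0)" using T assms(5) g_def by simp
    also have "\<dots> = c" using invar[OF T(1)] c_def g_def by simp
    finally have "g e = c" .
    moreover have "e \<in> \<Omega>" using e unfolding E_def extreme_point_of_def by blast
    ultimately show ?thesis using assms(3) by simp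
  qed
  have lin_h: "linear (\<lambda>x. g x - c * u x)"
    by (rule linearI) (simp_all add: linear_add[OF lin_g] linear_add[OF assms(2)]
        linear_scale[OF lin_g] linear_scale[OF assms(2)] algebra_simps)
  have h0: "g x - c * u x = 0" for x
  proof -
    have "\<Omega> \<subseteq> span E" using KM convex_hull_subset_span by blast
    then have "span \<Omega> \<subseteq> span E" by (simp add: span_minimal)
    then have "x \<in> span E" using ss unfolding state_space_def by auto
    then show ?thesis
      using linear_eq_0_on_span[OF lin_h] gE by auto
  qed
  have "c = 1" using h0[of \<omega>M] g1 assms(3,4) by simp
  then have gu: "g x = u x" for x using h0[of x] by simp
  define d where "d = \<omega>M - u_hat"
  have "inner_GL \<mu> d d = g d - inner_GL \<mu> u_hat d"
    unfolding g_def inner_GL_def d_def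
    by (subst Bochner_Integration.integral_diff[symmetric, OF integ integ]) (simp add: matrix_vector_mult_diff_distrib inner_diff_left)
  also have "\<dots> = 0" using gu assms(8) by simp
  finally have "integral\<^sup>L \<mu> (\<lambda>T. (T *v d) \<bullet> (T *v d)) = 0" unfolding inner_GL_def .
  then have "AE T in \<mu>. (T *v d) \<bullet> (T *v d) = 0"
    using integral_nonneg_eq_0_iff_AE[OF integ] by simp
  then have AEd: "AE T in \<mu>. T *v d = 0 \<and> T \<in> GL_Omega \<Omega>" using AEGL by eventually_elim simp
  have "\<exists>T. T *v d = 0 \<and> T \<in> GL_Omega \<Omega>"
  proof (rule ccontr)
    assume "\<not> ?thesis"
    then have "AE T in \<mu>. False" using AEd by (rule_tac AE_mp[OF AEd]) auto
    then show False using prob_space.AE_False[OF P] by simp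
  qed
  then obtain T where T: "T *v d = 0" "T \<in> GL_Omega \<Omega>" by blast
  then obtain T' where "T' ** T = mat 1" unfolding GL_Omega_def invertible_def by blast
  then have "d = T' *v (T *v d)" by (simp add: matrix_vector_mul_assoc)
  then have "d = 0" using T by simp
  then show ?thesis unfolding d_def by simp
qed
end
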